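(* Let $R=\begin{pmatrix} A & M\\ N & B\end{pmatrix}$ be a Morita context ring such that $MN$ is a nilpotent ideal of $A$ and $NM$ is a nilpotent ideal of $B$. If $R$ is a GWNC ring, then $A$ and $B$ are weakly nil-clean rings. Conversely, if one of $A$, $B$ is nil-clean and the other is weakly nil-clean, then $R$ is GWNC.
   Context: All rings are associative with identity. A Morita context ring: $A,B$ rings, $M$ an $(A,B)$-bimodule, $N$ a $(B,A)$-bimodule, with bilinear maps $\phi:M\otimes_B N\to A$, $\psi:N\otimes_A M\to B$ satisfying ${\rm Id}_M\otimes\psi=\phi\otimes{\rm Id}_M$ and ${\rm Id}_N\otimes\phi=\psi\otimes{\rm Id}_N$; writing $mn=\phi(m\otimes n)$, $nm=\psi(n\otimes m)$, the set of matrices $\begin{pmatrix} a & m\\ n & b\end{pmatrix}$ is a ring under matrix operations; $MN={\rm Im}\,\phi$, $NM={\rm Im}\,\psi$. For a ring $S$, $U(S)$, ${\rm Nil}(S)$, ${\rm Id}(S)$ denote units, nilpotents, idempotents. $S$ is GWNC if every $a\in S\setminus U(S)$ can be written as $a=q+e$ or $a=q-e$ with $q\in{\rm Nil}(S)$, $e\in{\rm Id}(S)$. $S$ is weakly nil-clean if for every $a\in S$ there is $e\in{\rm Id}(S)$ with $a-e$ or $a+e$ nilpotent; $S$ is nil-clean if every element is a sum of an idempotent and a nilpotent. *)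

theory Defs
  imports Main
begin

definition unit_op :: "('r \<Rightarrow> 'r \<Rightarrow> 'r) \<Rightarrow> 'r \<Rightarrow> 'r \<Rightarrow> bool" where
  "unit_op mul one x \<longleftrightarrow> (\<exists>y. mul x y = one \<and> mul y x = one)"

definition nil_op :: "('r \<Rightarrow> 'r \<Rightarrow> 'r) \<Rightarrow> 'r \<Rightarrow> 'r \<Rightarrow> 'r \<Rightarrow> bool" where
  "nil_op mul zero one x \<longleftrightarrow> (\<exists>k::nat. ((mul x) ^^ k) one = zero)"

definition idem_op :: "('r \<Rightarrow> 'r \<Rightarrow> 'r) \<Rightarrow> 'r \<Rightarrow> bool" where
  "idem_op mul e \<longleftrightarrow> mul e e = e"

definition GWNC_op :: "('r \<Rightarrow> 'r \<Rightarrow> 'r) \<Rightarrow> ('r \<Rightarrow> 'r \<Rightarrow> 'r) \<Rightarrow> ('r \<Rightarrow> 'r)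
    \<Rightarrow> 'r \<Rightarrow> 'r \<Rightarrow> bool" where
  "GWNC_op mul add neg zero one \<longleftrightarrow>
     (\<forall>a. \<not> unit_op mul one a \<longrightarrow>
        (\<exists>q e. nil_op mul zero one q \<and> idem_op mul e \<and>
               (a = add q e \<or> a = add q (neg e))))"

definition weakly_nil_clean_op :: "('r \<Rightarrow> 'r \<Rightarrow> 'r) \<Rightarrow> ('r \<Rightarrow> 'r \<Rightarrow> 'r) \<Rightarrow> ('r \<Rightarrow> 'r)
    \<Rightarrow> 'r \<Rightarrow> 'r \<Rightarrow> bool" where
  "weakly_nil_clean_op mul add neg zero one \<longleftrightarrow>
     (\<forall>a. \<exists>e. idem_op mul e \<and>
        (nil_op mul zero one (add a (neg e)) \<or> nil_op mul zero one (add a e)))"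

definition nil_clean_op :: "('r \<Rightarrow> 'r \<Rightarrow> 'r) \<Rightarrow> ('r \<Rightarrow> 'r \<Rightarrow> 'r) \<Rightarrow> 'r \<Rightarrow> 'r \<Rightarrow> bool" where
  "nil_clean_op mul add zero one \<longleftrightarrow>
     (\<forall>a. \<exists>q e. nil_op mul zero one q \<and> idem_op mul e \<and> a = add e q)"

definition weakly_nil_clean :: "'a::ring_1 itself \<Rightarrow> bool" where
  "weakly_nil_clean _ \<longleftrightarrow> weakly_nil_clean_op ((*) :: 'a \<Rightarrow> 'a \<Rightarrow> 'a) (+) uminus 0 1"

definition nil_clean :: "'a::ring_1 itself \<Rightarrow> bool" where
  "nil_clean _ \<longleftrightarrow> nil_clean_op ((*) :: 'a \<Rightarrow> 'a \<Rightarrow> 'a) (+) 0 1"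

definition nilpotent_set :: "'a::ring_1 set \<Rightarrow> bool" where
  "nilpotent_set I \<longleftrightarrow>
     (\<exists>k::nat. \<forall>x :: nat \<Rightarrow> 'a. (\<forall>i<k. x i \<in> I) \<longrightarrow> prod_list (map x [0..<k]) = 0)"

text \<open>Data: A ('a), B ('b) rings; M ('m) an (A,B)-bimodule with actions lA, rB;
  N ('n) a (B,A)-bimodule with actions lB, rA; pairings phi: M x N -> A, psi: N x M -> B.\<close>

definition morita_context ::
  "('a::ring_1 \<Rightarrow> 'm::ab_group_add \<Rightarrow> 'm) \<Rightarrow> ('m \<Rightarrow> 'b::ring_1 \<Rightarrow> 'm)
   \<Rightarrow> ('b \<Rightarrow> 'n::ab_group_add \<Rightarrow> 'n) \<Rightarrow> ('n \<Rightarrow> 'a \<Rightarrow> 'n)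
   \<Rightarrow> ('m \<Rightarrow> 'n \<Rightarrow> 'a) \<Rightarrow> ('n \<Rightarrow> 'm \<Rightarrow> 'b) \<Rightarrow> bool" where
  "morita_context lA rB lB rA phi psi \<longleftrightarrow>
    \<comment> \<open>M is an (A,B)-bimodule\<close>
    (\<forall>a a' m. lA (a + a') m = lA a m + lA a' m) \<and>
    (\<forall>a m m'. lA a (m + m') = lA a m + lA a m') \<and>
    (\<forall>a a' m. lA (a * a') m = lA a (lA a' m)) \<and>
    (\<forall>m. lA 1 m = m) \<and>
    (\<forall>m b b'. rB m (b + b') = rB m b + rB m b') \<and>
    (\<forall>m m' b. rB (m + m') b = rB m b + rB m' b) \<and>
    (\<forall>m b b'. rB m (b * b') = rB (rB m b) b') \<and>
    (\<forall>m. rB m 1 = m) \<and>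
    (\<forall>a m b. lA a (rB m b) = rB (lA a m) b) \<and>
    \<comment> \<open>N is a (B,A)-bimodule\<close>
    (\<forall>b b' n. lB (b + b') n = lB b n + lB b' n) \<and>
    (\<forall>b n n'. lB b (n + n') = lB b n + lB b n') \<and>
    (\<forall>b b' n. lB (b * b') n = lB b (lB b' n)) \<and>
    (\<forall>n. lB 1 n = n) \<and>
    (\<forall>n a a'. rA n (a + a') = rA n a + rA n a') \<and>
    (\<forall>n n' a. rA (n + n') a = rA n a + rA n' a) \<and>
    (\<forall>n a a'. rA n (a * a') = rA (rA n a) a') \<and>
    (\<forall>n. rA n 1 = n) \<and>
    (\<forall>b n a. lB b (rA n a) = rA (lB b n) a) \<and>
    \<comment> \<open>phi : M \<otimes>_B N \<rightarrow> A is an (A,A)-bimodule map\<close>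
    (\<forall>m m' n. phi (m + m') n = phi m n + phi m' n) \<and>
    (\<forall>m n n'. phi m (n + n') = phi m n + phi m n') \<and>
    (\<forall>m b n. phi (rB m b) n = phi m (lB b n)) \<and>
    (\<forall>a m n. phi (lA a m) n = a * phi m n) \<and>
    (\<forall>m n a. phi m (rA n a) = phi m n * a) \<and>
    \<comment> \<open>psi : N \<otimes>_A M \<rightarrow> B is a (B,B)-bimodule map\<close>
    (\<forall>n n' m. psi (n + n') m = psi n m + psi n' m) \<and>
    (\<forall>n m m'. psi n (m + m') = psi n m + psi n m') \<and>
    (\<forall>n a m. psi (rA n a) m = psi n (lA a m)) \<and>
    (\<forall>b n m. psi (lB b n) m = b * psi n m) \<and>
    (\<forall>n m b. psi n (rB m b) = psi n m * b) \<and>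
    \<comment> \<open>associativity conditions (mn)m' = m(nm'), (nm)n' = n(mn')\<close>
    (\<forall>m n m'. lA (phi m n) m' = rB m (psi n m')) \<and>
    (\<forall>n m n'. lB (psi n m) n' = rA n (phi m n'))"

text \<open>The Morita context ring: elements (a, m, n, b) stand for the matrix [[a, m], [n, b]].\<close>

definition morita_mult ::
  "('a::ring_1 \<Rightarrow> 'm::ab_group_add \<Rightarrow> 'm) \<Rightarrow> ('m \<Rightarrow> 'b::ring_1 \<Rightarrow> 'm)
   \<Rightarrow> ('b \<Rightarrow> 'n::ab_group_add \<Rightarrow> 'n) \<Rightarrow> ('n \<Rightarrow> 'a \<Rightarrow> 'n)
   \<Rightarrow> ('m \<Rightarrow> 'n \<Rightarrow> 'a) \<Rightarrow> ('n \<Rightarrow> 'm \<Rightarrow> 'b)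
   \<Rightarrow> 'a \<times> 'm \<times> 'n \<times> 'b \<Rightarrow> 'a \<times> 'm \<times> 'n \<times> 'b \<Rightarrow> 'a \<times> 'm \<times> 'n \<times> 'b" where
  "morita_mult lA rB lB rA phi psi x y =
    (case x of (a, m, n, b) \<Rightarrow> case y of (a', m', n', b') \<Rightarrow>
      (a * a' + phi m n', lA a m' + rB m b', lB b n' + rA n a', psi n m' + b * b'))"

definition morita_add ::
  "'a::ring_1 \<times> 'm::ab_group_add \<times> 'n::ab_group_add \<times> 'b::ring_1
   \<Rightarrow> 'a \<times> 'm \<times> 'n \<times> 'b \<Rightarrow> 'a \<times> 'm \<times> 'n \<times> 'b" where
  "morita_add x y = (case x of (a, m, n, b) \<Rightarrow> case y of (a', m', n', b') \<Rightarrow>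
      (a + a', m + m', n + n', b + b'))"

definition morita_neg ::
  "'a::ring_1 \<times> 'm::ab_group_add \<times> 'n::ab_group_add \<times> 'b::ring_1 \<Rightarrow> 'a \<times> 'm \<times> 'n \<times> 'b" where
  "morita_neg x = (case x of (a, m, n, b) \<Rightarrow> (- a, - m, - n, - b))"

definition morita_zero :: "'a::ring_1 \<times> 'm::ab_group_add \<times> 'n::ab_group_add \<times> 'b::ring_1" where
  "morita_zero = (0, 0, 0, 0)"

definition morita_one :: "'a::ring_1 \<times> 'm::ab_group_add \<times> 'n::ab_group_add \<times> 'b::ring_1" where
  "morita_one = (1, 0, 0, 1)"

text \<open>MN = Im phi (finite sums of products mn), NM = Im psi.\<close>

definition pair_image :: "('x \<Rightarrow> 'y \<Rightarrow> 'c::comm_monoid_add) \<Rightarrow> 'c set" where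
  "pair_image f = {s. \<exists>(k::nat) u v. s = (\<Sum>i<k. f (u i) (v i))}"

end

theory Submission
  imports Defs
begin


lemma numc1: "y * numeral w = numeral w * (y::'a::ring_1)"
  by (metis mult_of_nat_commute of_nat_numeral)
lemma numc2: "y * (numeral w * x) = numeral w * (y * (x::'a::ring_1))"
  by (metis mult.assoc numc1)
lemma cmb1: "numeral a * x + numeral b * x = numeral (a+b) * (x::'a::ring_1)"
  by (metis distrib_right numeral_plus_numeral)
lemma cmb2: "numeral a * x + (numeral b * x + y) = numeral (a+b) * x + (y::'a::ring_1)"
  by (metis add.assoc cmb1)
lemma cmb3: "x + numeral b * x = (1 + numeral b) * (x::'a::ring_1)"
  by (metis distrib_right mult_1)
lemma cmb4: "x + (numeral b * x + y) = (1 + numeral b) * x + (y::'a::ring_1)"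
  by (metis distrib_right mult_1 add.assoc)
lemma newton: "let g = 3*e*e - 2*e*e*e; t = e*e - e in g*g - g = t*(t*(4*t - 3)) \<and> g - e = t * (1 - 2*e)" for e :: "'a::ring_1"
proof -
  note a = numc1[of e] numc2[of e]
  show ?thesis by (simp add: Let_def algebra_simps a cmb1 cmb2 cmb3 cmb4)
qed

lemma funpow_mult_one: "(((*) x) ^^ k) 1 = (x::'a::ring_1) ^ k"
  by (induction k) auto

locale nilid =
  fixes I :: "'a::ring_1 set" and K :: nat
  assumes I0: "0 \<in> I"
    and Iadd: "x \<in> I \<Longrightarrow> y \<in> I \<Longrightarrow> x + y \<in> I"
    and Ineg: "x \<in> I \<Longrightarrow> - x \<in> I"
    and Ilm: "x \<in> I \<Longrightarrow> a * x \<in> I"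
    and Irm: "x \<in> I \<Longrightarrow> x * a \<in> I"
    and Inil: "length ys = K \<Longrightarrow> set ys \<subseteq> I \<Longrightarrow> prod_list ys = 0"
begin

lemma Idiff: "x \<in> I \<Longrightarrow> y \<in> I \<Longrightarrow> x - y \<in> I"
  using Iadd Ineg by (metis diff_conv_add_uminus)

lemma K_pos: "K > 0"
proof (rule ccontr)
  assume "\<not> K > 0"
  then have "prod_list ([]::'a list) = 0" using Inil[of "[]"] by simp
  then show False by simp
qed

definition D :: "nat \<Rightarrow> 'a set" where
  "D j = {x. \<forall>ys. length ys = K - j \<longrightarrow> set ys \<subseteq> I \<longrightarrow> prod_list ys * x = 0}"

lemma D_0: "x \<in> D 0"
  unfolding D_def using Inil by simp

lemma D_zero: "0 \<in> D j"
  unfolding D_def by simp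

lemma D_add: "x \<in> D j \<Longrightarrow> y \<in> D j \<Longrightarrow> x + y \<in> D j"
  unfolding D_def by (simp add: distrib_left)

lemma D_neg: "x \<in> D j \<Longrightarrow> - x \<in> D j"
  unfolding D_def by simp

lemma D_rmul: "x \<in> D j \<Longrightarrow> x * a \<in> D j"
  unfolding D_def by (simp add: mult.assoc[symmetric])

lemma D_mul: assumes u: "u \<in> I" and x: "x \<in> D j" shows "u * x \<in> D (Suc j)"
proof (cases "j < K")
  case True
  show ?thesis unfolding D_def
  proof (intro CollectI allI impI)
    fix ys :: "'a list" assume "length ys = K - Suc j" "set ys \<subseteq> I"
    moreover have "length (ys @ [u]) = K - j" using True \<open>length ys = K - Suc j\<close> by simp
    moreover have "set (ys @ [u]) \<subseteq> I" using \<open>set ys \<subseteq> I\<close> u by simp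
    ultimately have "prod_list (ys @ [u]) * x = 0" using x unfolding D_def by blast
    then show "prod_list ys * (u * x) = 0" by (simp add: mult.assoc)
  qed
next
  case False
  then have "prod_list [] * x = 0" using x unfolding D_def by auto
  then have "x = 0" by simp
  then show ?thesis by (simp add: D_zero)
qed

lemma D_big: "K \<le> j \<Longrightarrow> x \<in> D j \<Longrightarrow> x = 0"
  unfolding D_def by (metis (mono_tags, lifting) diff_is_0_eq empty_subsetI length_0_conv
      list.set(1) mem_Collect_eq mult_1 prod_list.Nil)

lemma D_mono: assumes "j \<le> j'" "x \<in> D j'" shows "x \<in> D j"
  unfolding D_def
proof (intro CollectI allI impI)
  fix ys :: "'a list" assume l: "length ys = K - j" and s: "set ys \<subseteq> I"
  define ys2 where "ys2 = drop (j' - j) ys"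
  define ys1 where "ys1 = take (j' - j) ys"
  have "ys = ys1 @ ys2" unfolding ys1_def ys2_def by simp
  moreover have "length ys2 = K - j'" using l assms(1) unfolding ys2_def by simp
  moreover have "set ys2 \<subseteq> I" using s unfolding ys2_def by (meson in_set_dropD subset_iff)
  ultimately show "prod_list ys * x = 0" using assms(2) unfolding D_def
    by (simp add: mult.assoc)
qed

lemma I_D1: "x \<in> I \<Longrightarrow> x \<in> D 1"
  using D_mul[of x 1 0] D_0 by simp

lemma pow_D: "x \<in> I \<Longrightarrow> x ^ k \<in> D k"
  by (induction k) (auto simp: D_0 D_mul)

lemma I_nilp: "x \<in> I \<Longrightarrow> x ^ K = 0"
  using pow_D D_big by blast

lemma I_diff_pow: "x - y \<in> I \<Longrightarrow> x ^ k - y ^ k \<in> I"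
proof (induction k)
  case 0 then show ?case using I0 by simp
next
  case (Suc k)
  have "x ^ Suc k - y ^ Suc k = x * (x ^ k - y ^ k) + (x - y) * y ^ k"
    by (simp add: algebra_simps)
  then show ?case using Suc Iadd Ilm Irm by metis
qed

lemma lift_idem:
  assumes "e * e - e \<in> I"
  shows "\<exists>e'. e' * e' = e' \<and> e' - e \<in> I"
proof -
  define g where "g = (\<lambda>e::'a. 3*e*e - 2*e*e*e)"
  define es where "es = (\<lambda>n. (g ^^ n) e)"
  have key: "es n * es n - es n \<in> I \<and> es n * es n - es n \<in> D (Suc n) \<and> es n - e \<in> I" for n
  proof (induction n)
    case 0 then show ?case using assms I_D1 I0 by (simp add: es_def)
  next
    case (Suc n)
    let ?e = "es n"
    let ?t = "?e * ?e - ?e"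
    have es: "es (Suc n) = g ?e" by (simp add: es_def)
    have nw0: "g ?e * g ?e - g ?e = ?t * (?t * (4*?t - 3)) \<and> g ?e - ?e = ?t * (1 - 2 * ?e)"
      using newton[of ?e] unfolding g_def Let_def by assumption
    have nw: "g ?e * g ?e - g ?e = ?t * (?t * (4*?t - 3))" "g ?e - ?e = ?t * (1 - 2 * ?e)"
      using nw0 by blast+
    have t1: "?t \<in> I" "?t \<in> D (Suc n)" "?e - e \<in> I" using Suc by blast+
    have "?t * (?t * (4*?t - 3)) \<in> I" by (rule Irm[OF t1(1)])
    moreover have "?t * (?t * (4*?t - 3)) \<in> D (Suc (Suc n))"
      by (rule D_mul[OF t1(1) D_rmul[OF t1(2)]])
    moreover have "g ?e - e \<in> I"
    proof -
      have "g ?e - e = (g ?e - ?e) + (?e - e)" by simp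
      then have eq: "g ?e - e = ?t * (1 - 2 * ?e) + (?e - e)" using nw(2) by simp
      have "?t * (1 - 2 * ?e) + (?e - e) \<in> I" by (rule Iadd[OF Irm[OF t1(1)] t1(3)])
      then show ?thesis by (simp only: eq)
    qed
    ultimately show ?case unfolding es nw(1) by blast
  qed
  have "es K * es K - es K \<in> D (Suc K)" using key[of K] by blast
  then have "es K * es K - es K = 0" by (rule D_big[rotated]) simp
  then show ?thesis using key[of K] by auto
qed

lemma wnc_lift:
  assumes "e * e - e \<in> I" "q ^ k \<in> I" "a = q + e \<or> a = q - e"
  shows "\<exists>e'. e' * e' = e' \<and> ((\<exists>k. (a + - e') ^ k = 0) \<or> (\<exists>k. (a + e') ^ k = 0))"
proof -
  obtain e' where e': "e' * e' = e'" "e' - e \<in> I" using lift_idem assms(1) by blast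
  { fix c assume c: "c - q \<in> I"
    have "c ^ k - q ^ k \<in> I" using I_diff_pow c by blast
    then have "(c ^ k - q ^ k) + q ^ k \<in> I" using assms(2) Iadd by blast
    then have "c ^ k \<in> I" by simp
    then have "(c ^ k) ^ K = 0" by (rule I_nilp)
    then have "\<exists>k. c ^ k = 0" by (metis power_mult) }
  note cq = this
  from assms(3) show ?thesis
  proof
    assume "a = q + e"
    then have "(a + - e') - q = - (e' - e)" by (simp add: algebra_simps)
    then have "(a + - e') - q \<in> I" using e'(2) Ineg by metis
    then obtain k where "(a + - e') ^ k = 0" using cq by blast
    then show ?thesis using e'(1) by blast
  next
    assume "a = q - e"
    then have "(a + e') - q = (e' - e)" by (simp add: algebra_simps)
    then have "(a + e') - q \<in> I" using e'(2) by metis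
    then obtain k where "(a + e') ^ k = 0" using cq by blast
    then show ?thesis using e'(1) by blast
  qed
qed

end




lemma pi_zero: "0 \<in> pair_image f"
  unfolding pair_image_def by (rule CollectI, rule exI[of _ 0]) simp

lemma pi_add1: "x \<in> pair_image f \<Longrightarrow> x + f a b \<in> pair_image f"
proof -
  assume "x \<in> pair_image f"
  then obtain k :: nat and u v where x: "x = (\<Sum>i<k. f (u i) (v i))" unfolding pair_image_def by blast
  have "x + f a b = (\<Sum>i<Suc k. f ((u(k:=a)) i) ((v(k:=b)) i))"
    unfolding x by simp
  then show ?thesis unfolding pair_image_def by blast
qed

lemma pi_single: "f a b \<in> pair_image f"
  using pi_add1[OF pi_zero, of f a b] by simp

lemma pi_induct:
  assumes "x \<in> pair_image f" "P 0" "\<And>x a b. P x \<Longrightarrow> P (x + f a b)"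
  shows "P x"
proof -
  obtain k :: nat and u v where x: "x = (\<Sum>i<k. f (u i) (v i))" using assms(1) unfolding pair_image_def by blast
  have "P (\<Sum>i<k. f (u i) (v i))" by (induction k) (auto intro: assms(2,3))
  then show ?thesis using x by simp
qed

lemma pi_add: "x \<in> pair_image f \<Longrightarrow> y \<in> pair_image f \<Longrightarrow> x + y \<in> pair_image f"
proof -
  assume x: "x \<in> pair_image f" and y: "y \<in> pair_image f"
  show ?thesis using y
    by (rule pi_induct) (use x in \<open>auto simp: add.assoc[symmetric] intro: pi_add1\<close>)
qed

locale mctx =
  fixes lA :: "'a::ring_1 \<Rightarrow> 'm::ab_group_add \<Rightarrow> 'm"
    and rB :: "'m \<Rightarrow> 'b::ring_1 \<Rightarrow> 'm"
    and lB :: "'b \<Rightarrow> 'n::ab_group_add \<Rightarrow> 'n"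
    and rA :: "'n \<Rightarrow> 'a \<Rightarrow> 'n"
    and phi :: "'m \<Rightarrow> 'n \<Rightarrow> 'a"
    and psi :: "'n \<Rightarrow> 'm \<Rightarrow> 'b"
  assumes ctx: "morita_context lA rB lB rA phi psi"
begin

lemma ax:
  "lA (a + a') m = lA a m + lA a' m"
  "lA a (m + m') = lA a m + lA a m'"
  "lA (a * a') m = lA a (lA a' m)"
  "lA 1 m = m"
  "rB m (b + b') = rB m b + rB m b'"
  "rB (m + m') b = rB m b + rB m' b"
  "rB m (b * b') = rB (rB m b) b'"
  "rB m 1 = m"
  "lA a (rB m b) = rB (lA a m) b"
  "lB (b + b') n = lB b n + lB b' n"
  "lB b (n + n') = lB b n + lB b n'"
  "lB (b * b') n = lB b (lB b' n)"
  "lB 1 n = n"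
  "rA n (a + a') = rA n a + rA n a'"
  "rA (n + n') a = rA n a + rA n' a"
  "rA n (a * a') = rA (rA n a) a'"
  "rA n 1 = n"
  "lB b (rA n a) = rA (lB b n) a"
  "phi (m + m') n = phi m n + phi m' n"
  "phi m (n + n') = phi m n + phi m n'"
  "phi (rB m b) n = phi m (lB b n)"
  "phi (lA a m) n = a * phi m n"
  "phi m (rA n a) = phi m n * a"
  "psi (n + n') m = psi n m + psi n' m"
  "psi n (m + m') = psi n m + psi n m'"
  "psi (rA n a) m = psi n (lA a m)"
  "psi (lB b n) m = b * psi n m"
  "psi n (rB m b) = psi n m * b"
  "lA (phi m n) m' = rB m (psi n m')"
  "lB (psi n m) n' = rA n (phi m n')"
  using ctx unfolding morita_context_def by simp_all

lemma zr:
  "lA 0 m = 0" "lA a 0 = 0" "rB 0 b = 0" "rB m 0 = 0"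
  "lB 0 n = 0" "lB b 0 = 0" "rA 0 a = 0" "rA n 0 = 0"
  "phi 0 n = 0" "phi m 0 = 0" "psi 0 m = 0" "psi n 0 = 0"
  using ax(1)[of 0 0 m] ax(2)[of a 0 0] ax(6)[of 0 0 b] ax(5)[of m 0 0]
    ax(10)[of 0 0 n] ax(11)[of b 0 0] ax(15)[of 0 0 a] ax(14)[of n 0 0]
    ax(19)[of 0 0 n] ax(20)[of m 0 0] ax(24)[of 0 0 m] ax(25)[of n 0 0]
  by simp_all

lemma ng:
  "phi (- m) n = - phi m n" "psi (- n) m = - psi n m"
  using ax(19)[of m "-m" n] ax(24)[of n "-n" m] zr by (simp_all add: eq_neg_iff_add_eq_0 add.commute)

abbreviation mul where "mul \<equiv> morita_mult lA rB lB rA phi psi"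

lemma mul_simp: "mul (a, m, n, b) (a', m', n', b') =
   (a * a' + phi m n', lA a m' + rB m b', lB b n' + rA n a', psi n m' + b * b')"
  by (simp add: morita_mult_def)

lemma mul_assoc: "mul (mul X Y) Z = mul X (mul Y Z)"
  by (cases X; cases Y; cases Z) (simp add: mul_simp ax zr algebra_simps)

lemma mul_one_left: "mul morita_one X = X"
  by (cases X) (simp add: mul_simp morita_one_def ax zr)

lemma mul_one_right: "mul X morita_one = X"
  by (cases X) (simp add: mul_simp morita_one_def ax zr)

lemma mul_zero_right: "mul X morita_zero = morita_zero"
  by (cases X) (simp add: mul_simp morita_zero_def ax zr)

definition rpow where "rpow X k = (mul X ^^ k) morita_one"

lemma rpow_0: "rpow X 0 = morita_one" by (simp add: rpow_def)
lemma rpow_Suc: "rpow X (Suc k) = mul X (rpow X k)" by (simp add: rpow_def)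

lemma rpow_add: "rpow X (k + l) = mul (rpow X k) (rpow X l)"
  by (induction k) (simp_all add: rpow_0 rpow_Suc mul_one_left mul_assoc)

lemma rpow_rpow: "rpow (rpow X k) l = rpow X (k * l)"
  by (induction l) (simp_all add: rpow_0 rpow_Suc rpow_add[symmetric])

lemma nilid_phi: assumes "nilpotent_set (pair_image phi)" shows "\<exists>K. nilid (pair_image phi) K"
proof -
  obtain K where K: "\<forall>x :: nat \<Rightarrow> 'a. (\<forall>i<K. x i \<in> pair_image phi) \<longrightarrow> prod_list (map x [0..<K]) = 0"
    using assms unfolding nilpotent_set_def by blast
  have "nilid (pair_image phi) K"
  proof
    show "0 \<in> pair_image phi" by (rule pi_zero)
    show "x + y \<in> pair_image phi" if "x \<in> pair_image phi" "y \<in> pair_image phi" for x y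
      using that by (rule pi_add)
    show "- x \<in> pair_image phi" if "x \<in> pair_image phi" for x
      using that
    proof (rule pi_induct)
      show "- 0 \<in> pair_image phi" by (simp add: pi_zero)
    next
      fix x a b assume "- x \<in> pair_image phi"
      then have "- x + phi (- a) b \<in> pair_image phi" by (rule pi_add1)
      moreover have "- (x + phi a b) = - x + phi (- a) b" by (simp add: ng)
      ultimately show "- (x + phi a b) \<in> pair_image phi" by simp
    qed
    show "a * x \<in> pair_image phi" if "x \<in> pair_image phi" for x a
      using that by (rule pi_induct) (auto simp: pi_zero distrib_left ax(22)[symmetric] intro: pi_add1)
    show "x * a \<in> pair_image phi" if "x \<in> pair_image phi" for x a
      using that by (rule pi_induct) (auto simp: pi_zero distrib_right ax(23)[symmetric] intro: pi_add1)
    show "prod_list ys = 0" if "length ys = K" "set ys \<subseteq> pair_image phi" for ys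
    proof -
      have "\<forall>i<K. ys ! i \<in> pair_image phi" using that nth_mem by auto
      then show ?thesis using K that(1) map_nth by metis
    qed
  qed
  then show ?thesis by blast
qed

lemma nilid_psi: assumes "nilpotent_set (pair_image psi)" shows "\<exists>K. nilid (pair_image psi) K"
proof -
  obtain K where K: "\<forall>x :: nat \<Rightarrow> 'b. (\<forall>i<K. x i \<in> pair_image psi) \<longrightarrow> prod_list (map x [0..<K]) = 0"
    using assms unfolding nilpotent_set_def by blast
  have "nilid (pair_image psi) K"
  proof
    show "0 \<in> pair_image psi" by (rule pi_zero)
    show "x + y \<in> pair_image psi" if "x \<in> pair_image psi" "y \<in> pair_image psi" for x y
      using that by (rule pi_add)
    show "- x \<in> pair_image psi" if "x \<in> pair_image psi" for x
      using that
    proof (rule pi_induct)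
      show "- 0 \<in> pair_image psi" by (simp add: pi_zero)
    next
      fix x a b assume "- x \<in> pair_image psi"
      then have "- x + psi (- a) b \<in> pair_image psi" by (rule pi_add1)
      moreover have "- (x + psi a b) = - x + psi (- a) b" by (simp add: ng)
      ultimately show "- (x + psi a b) \<in> pair_image psi" by simp
    qed
    show "a * x \<in> pair_image psi" if "x \<in> pair_image psi" for x a
      using that by (rule pi_induct) (auto simp: pi_zero distrib_left ax(27)[symmetric] intro: pi_add1)
    show "x * a \<in> pair_image psi" if "x \<in> pair_image psi" for x a
      using that by (rule pi_induct) (auto simp: pi_zero distrib_right ax(28)[symmetric] intro: pi_add1)
    show "prod_list ys = 0" if "length ys = K" "set ys \<subseteq> pair_image psi" for ys
    proof -
      have "\<forall>i<K. ys ! i \<in> pair_image psi" using that nth_mem by auto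
      then show ?thesis using K that(1) map_nth by metis
    qed
  qed
  then show ?thesis by blast
qed

end



context mctx begin

abbreviation "IA \<equiv> pair_image phi"
abbreviation "IB \<equiv> pair_image psi"

lemma diag:
  assumes A: "nilid IA KA" and B: "nilid IB KB"
  shows "rpow (x, m, n, y) k = (a, m', n', b) \<Longrightarrow> a - x ^ k \<in> IA \<and> b - y ^ k \<in> IB"
proof (induction k arbitrary: a m' n' b)
  case 0
  then show ?case by (simp add: rpow_0 morita_one_def pi_zero)
next
  case (Suc k)
  obtain a0 m0 n0 b0 where r: "rpow (x, m, n, y) k = (a0, m0, n0, b0)" by (metis prod.exhaust)
  note IH = Suc.IH[OF r]
  have e: "(a, m', n', b) = (x * a0 + phi m n0, lA x m0 + rB m b0, lB y n0 + rA n a0, psi n m0 + y * b0)"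
    using Suc.prems r by (simp add: rpow_Suc mul_simp)
  have ea: "a - x ^ Suc k = x * (a0 - x ^ k) + phi m n0" using e by (simp add: algebra_simps)
  have eb: "b - y ^ Suc k = psi n m0 + y * (b0 - y ^ k)" using e by (simp add: algebra_simps)
  have IH1: "a0 - x ^ k \<in> IA" and IH2: "b0 - y ^ k \<in> IB" using IH by blast+
  have "x * (a0 - x ^ k) + phi m n0 \<in> IA"
    by (rule nilid.Iadd[OF A nilid.Ilm[OF A IH1] pi_single])
  moreover have "psi n m0 + y * (b0 - y ^ k) \<in> IB"
    by (rule nilid.Iadd[OF B pi_single nilid.Ilm[OF B IH2]])
  ultimately show ?case unfolding ea eb by blast
qed

lemma deepA:
  assumes A: "nilid IA KA" and v: "v \<in> IB" and h: "\<forall>m'. phi m' n1 \<in> nilid.D IA KA (Suc q)"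
  shows "phi m' (lB v n1) \<in> nilid.D IA KA (Suc (Suc q))"
  using v
proof (rule pi_induct)
  show "phi m' (lB 0 n1) \<in> nilid.D IA KA (Suc (Suc q))" by (simp add: zr nilid.D_zero[OF A])
next
  fix x a b assume "phi m' (lB x n1) \<in> nilid.D IA KA (Suc (Suc q))"
  moreover have "phi m' a * phi b n1 \<in> nilid.D IA KA (Suc (Suc q))"
    by (rule nilid.D_mul[OF A pi_single h[rule_format]])
  ultimately have "phi m' (lB x n1) + phi m' a * phi b n1 \<in> nilid.D IA KA (Suc (Suc q))"
    by (rule nilid.D_add[OF A])
  moreover have "phi m' (lB (x + psi a b) n1) = phi m' (lB x n1) + phi m' a * phi b n1"
    by (simp only: ax(10) ax(20) ax(30) ax(23))
  ultimately show "phi m' (lB (x + psi a b) n1) \<in> nilid.D IA KA (Suc (Suc q))"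
    by simp
qed

lemma deepB:
  assumes B: "nilid IB KB" and u: "u \<in> IA" and h: "\<forall>n'. psi n' m1 \<in> nilid.D IB KB (Suc q)"
  shows "psi n' (lA u m1) \<in> nilid.D IB KB (Suc (Suc q))"
  using u
proof (rule pi_induct)
  show "psi n' (lA 0 m1) \<in> nilid.D IB KB (Suc (Suc q))" by (simp add: zr nilid.D_zero[OF B])
next
  fix x a b assume "psi n' (lA x m1) \<in> nilid.D IB KB (Suc (Suc q))"
  moreover have "psi n' a * psi b m1 \<in> nilid.D IB KB (Suc (Suc q))"
    by (rule nilid.D_mul[OF B pi_single h[rule_format]])
  ultimately have "psi n' (lA x m1) + psi n' a * psi b m1 \<in> nilid.D IB KB (Suc (Suc q))"
    by (rule nilid.D_add[OF B])
  moreover have "psi n' (lA (x + phi a b) m1) = psi n' (lA x m1) + psi n' a * psi b m1"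
    by (simp only: ax(1) ax(25) ax(29) ax(28))
  ultimately show "psi n' (lA (x + phi a b) m1) \<in> nilid.D IB KB (Suc (Suc q))"
    by simp
qed

definition Inv where
  "Inv KA KB p q W = (case W of (a, m1, n1, b) \<Rightarrow>
     a \<in> nilid.D IA KA p \<and> b \<in> nilid.D IB KB p \<and> (\<forall>m'. phi m' n1 \<in> nilid.D IA KA (Suc q))
     \<and> (\<forall>n'. psi n' m1 \<in> nilid.D IB KB (Suc q)))"

lemma Inv_step:
  assumes A: "nilid IA KA" and B: "nilid IB KB" and u: "u \<in> IA" and v: "v \<in> IB"
    and I: "Inv KA KB p q W"
  shows "Inv KA KB (min (Suc p) (Suc q)) (min (Suc q) p) (mul (u, m, n, v) W)"
proof -
  obtain a m1 n1 b where W: "W = (a, m1, n1, b)" by (metis prod.exhaust)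
  have a: "a \<in> nilid.D IA KA p" and b: "b \<in> nilid.D IB KB p"
    and hn: "\<forall>m'. phi m' n1 \<in> nilid.D IA KA (Suc q)" and hm: "\<forall>n'. psi n' m1 \<in> nilid.D IB KB (Suc q)"
    using I unfolding Inv_def W by auto
  note DmA = nilid.D_mono[OF A] and DmB = nilid.D_mono[OF B]
  have 1: "u * a + phi m n1 \<in> nilid.D IA KA (min (Suc p) (Suc q))"
    by (rule nilid.D_add[OF A, OF DmA[OF _ nilid.D_mul[OF A u a]] DmA[OF _ hn[rule_format]]]) auto
  have 2: "psi n m1 + v * b \<in> nilid.D IB KB (min (Suc p) (Suc q))"
    by (rule nilid.D_add[OF B, OF DmB[OF _ hm[rule_format]] DmB[OF _ nilid.D_mul[OF B v b]]]) auto
  have 3: "phi m' (lB v n1 + rA n a) \<in> nilid.D IA KA (Suc (min (Suc q) p))" for m'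
  proof -
    have x: "phi m' (lB v n1) \<in> nilid.D IA KA (Suc (Suc q))" using deepA[OF A v hn] .
    have y: "phi m' n * a \<in> nilid.D IA KA (Suc p)" using nilid.D_mul[OF A pi_single a] .
    show ?thesis using nilid.D_add[OF A] DmA[OF _ x] DmA[OF _ y] by (simp add: ax)
  qed
  have 4: "psi n' (lA u m1 + rB m b) \<in> nilid.D IB KB (Suc (min (Suc q) p))" for n'
  proof -
    have x: "psi n' (lA u m1) \<in> nilid.D IB KB (Suc (Suc q))" using deepB[OF B u hm] .
    have y: "psi n' m * b \<in> nilid.D IB KB (Suc p)" using nilid.D_mul[OF B pi_single b] .
    show ?thesis using nilid.D_add[OF B] DmB[OF _ x] DmB[OF _ y] by (simp add: ax)
  qed
  show ?thesis unfolding W mul_simp Inv_def using 1 2 3 4 by simp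
qed

lemma Z_nil:
  assumes A: "nilid IA KA" and B: "nilid IB KB" and u: "u \<in> IA" and v: "v \<in> IB"
  shows "rpow (u, m, n, v) (4 * (KA + KB)) = morita_zero"
proof -
  let ?Z = "(u, m, n, v)"
  have inv: "Inv KA KB j j (rpow ?Z (2 * j))" for j
  proof (induction j)
    case 0
    then show ?case by (simp add: rpow_0 morita_one_def Inv_def zr nilid.D_0[OF A] nilid.D_0[OF B] nilid.D_zero[OF A] nilid.D_zero[OF B])
  next
    case (Suc j)
    have "rpow ?Z (2 * Suc j) = mul ?Z (mul ?Z (rpow ?Z (2 * j)))"
      by (simp add: rpow_Suc)
    moreover have "Inv KA KB (Suc j) j (mul ?Z (rpow ?Z (2 * j)))"
      using Inv_step[OF A B u v Suc] by simp
    ultimately show ?case using Inv_step[OF A B u v, of "Suc j" j] by simp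
  qed
  define J where "J = KA + KB"
  obtain a m1 n1 b where W: "rpow ?Z (2 * J) = (a, m1, n1, b)" by (metis prod.exhaust)
  have h: "a \<in> nilid.D IA KA J" "b \<in> nilid.D IB KB J" "phi m1 n1 \<in> nilid.D IA KA (Suc J)"
    "psi n1 m1 \<in> nilid.D IB KB (Suc J)"
    using inv[of J] unfolding W Inv_def by auto
  have "a = 0" by (rule nilid.D_big[OF A _ h(1)]) (simp add: J_def)
  have "b = 0" by (rule nilid.D_big[OF B _ h(2)]) (simp add: J_def)
  have "phi m1 n1 = 0" by (rule nilid.D_big[OF A _ h(3)]) (simp add: J_def)
  have "psi n1 m1 = 0" by (rule nilid.D_big[OF B _ h(4)]) (simp add: J_def)
  note z = \<open>a = 0\<close> \<open>b = 0\<close> \<open>phi m1 n1 = 0\<close> \<open>psi n1 m1 = 0\<close>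
  have "mul (rpow ?Z (2 * J)) (rpow ?Z (2 * J)) = morita_zero"
    using z unfolding W by (simp add: mul_simp zr morita_zero_def)
  moreover have "4 * J = 2 * J + 2 * J" by simp
  ultimately show ?thesis unfolding J_def[symmetric] by (metis rpow_add)
qed

lemma Y_nil:
  assumes A: "nilid IA KA" and B: "nilid IB KB" and x: "x ^ p1 = 0" and y: "y ^ p2 = 0"
  shows "nil_op mul morita_zero morita_one (x, m, n, y)"
proof -
  have x': "x ^ (p1 + p2) = 0" using x by (simp add: power_add)
  have y': "y ^ (p1 + p2) = 0" using y by (simp add: power_add)
  obtain a m' n' b where r: "rpow (x, m, n, y) (p1 + p2) = (a, m', n', b)" by (metis prod.exhaust)
  from diag[OF A B r] x' y' have "a \<in> IA" "b \<in> IB" by auto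
  then have "rpow (rpow (x, m, n, y) (p1 + p2)) (4 * (KA + KB)) = morita_zero"
    unfolding r by (rule Z_nil[OF A B])
  then show ?thesis unfolding nil_op_def rpow_rpow rpow_def[symmetric] by blast
qed

end



lemma wnc_iff: "weakly_nil_clean TYPE('a::ring_1) \<longleftrightarrow>
  (\<forall>a::'a. \<exists>e. e * e = e \<and> ((\<exists>k. (a + - e) ^ k = 0) \<or> (\<exists>k. (a + e) ^ k = 0)))"
  by (simp add: weakly_nil_clean_def weakly_nil_clean_op_def idem_op_def nil_op_def funpow_mult_one)

lemma nc_iff: "nil_clean TYPE('a::ring_1) \<longleftrightarrow>
  (\<forall>a::'a. \<exists>q e. (\<exists>k. q ^ k = 0) \<and> e * e = e \<and> a = e + q)"
  by (simp add: nil_clean_def nil_clean_op_def idem_op_def nil_op_def funpow_mult_one)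

lemma neg_nilp: "(q::'a::ring_1) ^ k = 0 \<Longrightarrow> (- q) ^ k = 0"
  by (metis power_minus mult_zero_right)

context mctx begin

lemma fwdA:
  assumes G: "GWNC_op mul morita_add morita_neg morita_zero morita_one"
    and A: "nilid IA KA" and B: "nilid IB KB"
  shows "weakly_nil_clean TYPE('a)"
  unfolding wnc_iff
proof
  fix a :: 'a
  let ?X = "(a, 0::'m, 0::'n, 0::'b)"
  have nu: "\<not> unit_op mul morita_one ?X"
  proof
    assume "unit_op mul morita_one ?X"
    then obtain Y where Y: "mul ?X Y = morita_one" unfolding unit_op_def by blast
    obtain a' m' n' b' where "Y = (a', m', n', b')" by (metis prod.exhaust)
    with Y show False by (simp add: mul_simp morita_one_def zr)
  qed
  then obtain Q E where Q: "nil_op mul morita_zero morita_one Q" and E: "idem_op mul E"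
    and XE: "?X = morita_add Q E \<or> ?X = morita_add Q (morita_neg E)"
    using G unfolding GWNC_op_def by blast
  obtain q1 q2 q3 q4 where Qd: "Q = (q1, q2, q3, q4)" by (metis prod.exhaust)
  obtain e1 e2 e3 e4 where Ed: "E = (e1, e2, e3, e4)" by (metis prod.exhaust)
  have h: "e1 * e1 + phi e2 e3 = e1" using E unfolding idem_op_def Ed by (simp add: mul_simp)
  have "e1 * e1 - e1 = e1 * e1 - (e1 * e1 + phi e2 e3)" using h by simp
  also have "\<dots> = - phi e2 e3" by simp
  finally have eI: "e1 * e1 - e1 \<in> IA" using nilid.Ineg[OF A pi_single] by simp
  obtain k where "(mul Q ^^ k) morita_one = morita_zero" using Q unfolding nil_op_def by blast
  then have "rpow (q1, q2, q3, q4) k = (0, 0, 0, 0)" unfolding rpow_def Qd morita_zero_def .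
  then have "0 - q1 ^ k \<in> IA" using diag[OF A B] by blast
  then have qI: "q1 ^ k \<in> IA" using nilid.Ineg[OF A] by fastforce
  have "a = q1 + e1 \<or> a = q1 - e1" using XE unfolding Qd Ed
    by (auto simp: morita_add_def morita_neg_def)
  then show "\<exists>e. e * e = e \<and> ((\<exists>k. (a + - e) ^ k = 0) \<or> (\<exists>k. (a + e) ^ k = 0))"
    using nilid.wnc_lift[OF A eI qI] by blast
qed

lemma fwdB:
  assumes G: "GWNC_op mul morita_add morita_neg morita_zero morita_one"
    and A: "nilid IA KA" and B: "nilid IB KB"
  shows "weakly_nil_clean TYPE('b)"
  unfolding wnc_iff
proof
  fix b :: 'b
  let ?X = "(0::'a, 0::'m, 0::'n, b)"
  have nu: "\<not> unit_op mul morita_one ?X"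
  proof
    assume "unit_op mul morita_one ?X"
    then obtain Y where Y: "mul ?X Y = morita_one" unfolding unit_op_def by blast
    obtain a' m' n' b' where "Y = (a', m', n', b')" by (metis prod.exhaust)
    with Y show False by (simp add: mul_simp morita_one_def zr)
  qed
  then obtain Q E where Q: "nil_op mul morita_zero morita_one Q" and E: "idem_op mul E"
    and XE: "?X = morita_add Q E \<or> ?X = morita_add Q (morita_neg E)"
    using G unfolding GWNC_op_def by blast
  obtain q1 q2 q3 q4 where Qd: "Q = (q1, q2, q3, q4)" by (metis prod.exhaust)
  obtain e1 e2 e3 e4 where Ed: "E = (e1, e2, e3, e4)" by (metis prod.exhaust)
  have h: "psi e3 e2 + e4 * e4 = e4" using E unfolding idem_op_def Ed by (simp add: mul_simp)
  have "e4 * e4 - e4 = e4 * e4 - (psi e3 e2 + e4 * e4)" using h by simp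
  also have "\<dots> = - psi e3 e2" by simp
  finally have eI: "e4 * e4 - e4 \<in> IB" using nilid.Ineg[OF B pi_single] by simp
  obtain k where "(mul Q ^^ k) morita_one = morita_zero" using Q unfolding nil_op_def by blast
  then have "rpow (q1, q2, q3, q4) k = (0, 0, 0, 0)" unfolding rpow_def Qd morita_zero_def .
  then have "0 - q4 ^ k \<in> IB" using diag[OF A B] by blast
  then have qI: "q4 ^ k \<in> IB" using nilid.Ineg[OF B] by fastforce
  have "b = q4 + e4 \<or> b = q4 - e4" using XE unfolding Qd Ed
    by (auto simp: morita_add_def morita_neg_def)
  then show "\<exists>e. e * e = e \<and> ((\<exists>k. (b + - e) ^ k = 0) \<or> (\<exists>k. (b + e) ^ k = 0))"
    using nilid.wnc_lift[OF B eI qI] by blast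
qed

lemma conv:
  assumes A: "nilid IA KA" and B: "nilid IB KB"
    and H: "\<And>(a::'a) (b::'b). \<exists>e f. e * e = e \<and> f * f = f \<and>
        (((\<exists>k. (a - e) ^ k = 0) \<and> (\<exists>k. (b - f) ^ k = 0)) \<or>
         ((\<exists>k. (a + e) ^ k = 0) \<and> (\<exists>k. (b + f) ^ k = 0)))"
  shows "GWNC_op mul morita_add morita_neg morita_zero morita_one"
  unfolding GWNC_op_def
proof (intro allI impI)
  fix X :: "'a \<times> 'm \<times> 'n \<times> 'b"
  obtain a m n b where X: "X = (a, m, n, b)" by (metis prod.exhaust)
  obtain e f where ef: "e * e = e" "f * f = f" and
    d: "((\<exists>k. (a - e) ^ k = 0) \<and> (\<exists>k. (b - f) ^ k = 0)) \<or>
         ((\<exists>k. (a + e) ^ k = 0) \<and> (\<exists>k. (b + f) ^ k = 0))"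
    using H by blast
  let ?E = "(e, 0::'m, 0::'n, f)"
  have idem: "idem_op mul ?E" unfolding idem_op_def by (simp add: mul_simp zr ef)
  from d show "\<exists>q e. nil_op mul morita_zero morita_one q \<and> idem_op mul e \<and>
      (X = morita_add q e \<or> X = morita_add q (morita_neg e))"
  proof
    assume "(\<exists>k. (a - e) ^ k = 0) \<and> (\<exists>k. (b - f) ^ k = 0)"
    then obtain k1 k2 where "(a - e) ^ k1 = 0" "(b - f) ^ k2 = 0" by blast
    then have "nil_op mul morita_zero morita_one (a - e, m, n, b - f)" by (rule Y_nil[OF A B])
    moreover have "X = morita_add (a - e, m, n, b - f) ?E" unfolding X by (simp add: morita_add_def)
    ultimately show ?thesis using idem by blast
  next
    assume "(\<exists>k. (a + e) ^ k = 0) \<and> (\<exists>k. (b + f) ^ k = 0)"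
    then obtain k1 k2 where "(a + e) ^ k1 = 0" "(b + f) ^ k2 = 0" by blast
    then have "nil_op mul morita_zero morita_one (a + e, m, n, b + f)" by (rule Y_nil[OF A B])
    moreover have "X = morita_add (a + e, m, n, b + f) (morita_neg ?E)"
      unfolding X by (simp add: morita_add_def morita_neg_def)
    ultimately show ?thesis using idem by blast
  qed
qed

end

theorem proposition2p50:
  fixes lA :: "'a::ring_1 \<Rightarrow> 'm::ab_group_add \<Rightarrow> 'm"
    and rB :: "'m \<Rightarrow> 'b::ring_1 \<Rightarrow> 'm"
    and lB :: "'b \<Rightarrow> 'n::ab_group_add \<Rightarrow> 'n"
    and rA :: "'n \<Rightarrow> 'a \<Rightarrow> 'n"
    and phi :: "'m \<Rightarrow> 'n \<Rightarrow> 'a"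
    and psi :: "'n \<Rightarrow> 'm \<Rightarrow> 'b"
  assumes ctx: "morita_context lA rB lB rA phi psi"
    and MN: "nilpotent_set (pair_image phi)"
    and NM: "nilpotent_set (pair_image psi)"
  shows "(GWNC_op (morita_mult lA rB lB rA phi psi) morita_add morita_neg morita_zero morita_one
            \<longrightarrow> weakly_nil_clean TYPE('a) \<and> weakly_nil_clean TYPE('b))
       \<and> (((nil_clean TYPE('a) \<and> weakly_nil_clean TYPE('b)) \<or>
            (weakly_nil_clean TYPE('a) \<and> nil_clean TYPE('b)))
            \<longrightarrow> GWNC_op (morita_mult lA rB lB rA phi psi) morita_add morita_neg morita_zero morita_one)"
proof -
  interpret mctx lA rB lB rA phi psi by (rule mctx.intro) (rule ctx)
  obtain KA where A: "nilid (pair_image phi) KA" using nilid_phi[OF MN] by blast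
  obtain KB where B: "nilid (pair_image psi) KB" using nilid_psi[OF NM] by blast
  show ?thesis
  proof (intro conjI impI)
    assume G: "GWNC_op (morita_mult lA rB lB rA phi psi) morita_add morita_neg morita_zero morita_one"
    show "weakly_nil_clean TYPE('a)" by (rule fwdA[OF G A B])
    show "weakly_nil_clean TYPE('b)" by (rule fwdB[OF G A B])
  next
    assume "(nil_clean TYPE('a) \<and> weakly_nil_clean TYPE('b)) \<or>
            (weakly_nil_clean TYPE('a) \<and> nil_clean TYPE('b))"
    then show "GWNC_op (morita_mult lA rB lB rA phi psi) morita_add morita_neg morita_zero morita_one"
    proof
      assume h: "nil_clean TYPE('a) \<and> weakly_nil_clean TYPE('b)"
      have nc: "\<exists>q e. (\<exists>k. q ^ k = 0) \<and> e * e = e \<and> c = e + q" for c :: 'a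
        using h unfolding nc_iff by blast
      have wb: "\<exists>f. f * f = f \<and> ((\<exists>k. (b + - f) ^ k = 0) \<or> (\<exists>k. (b + f) ^ k = 0))" for b :: 'b
        using h unfolding wnc_iff by blast
      show ?thesis
      proof (rule conv[OF A B])
        fix a :: 'a and b :: 'b
        obtain f where f: "f * f = f" and fd: "(\<exists>k. (b + - f) ^ k = 0) \<or> (\<exists>k. (b + f) ^ k = 0)"
          using wb by blast
        from fd show "\<exists>e f. e * e = e \<and> f * f = f \<and>
          (((\<exists>k. (a - e) ^ k = 0) \<and> (\<exists>k. (b - f) ^ k = 0)) \<or>
           ((\<exists>k. (a + e) ^ k = 0) \<and> (\<exists>k. (b + f) ^ k = 0)))"
        proof
          assume fb: "\<exists>k. (b + - f) ^ k = 0"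
          obtain q e where q: "\<exists>k. q ^ k = 0" and e: "e * e = e" and ae: "a = e + q" using nc by blast
          have "a - e = q" using ae by simp
          then show ?thesis using q e f fb by auto
        next
          assume fb: "\<exists>k. (b + f) ^ k = 0"
          obtain q e where q: "\<exists>k. q ^ k = 0" and e: "e * e = e" and ae: "- a = e + q" using nc by blast
          have "a + e = - (- a) + e" by simp
          also have "\<dots> = - (e + q) + e" by (simp only: ae)
          also have "\<dots> = - q" by (simp add: algebra_simps)
          finally have "a + e = - q" .
          then have "\<exists>k. (a + e) ^ k = 0" using q neg_nilp by metis
          then show ?thesis using e f fb by auto
        qed
      qed
    next
      assume h: "weakly_nil_clean TYPE('a) \<and> nil_clean TYPE('b)"
      have nc: "\<exists>q e. (\<exists>k. q ^ k = 0) \<and> e * e = e \<and> c = e + q" for c :: 'b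
        using h unfolding nc_iff by blast
      have wa: "\<exists>f. f * f = f \<and> ((\<exists>k. (a + - f) ^ k = 0) \<or> (\<exists>k. (a + f) ^ k = 0))" for a :: 'a
        using h unfolding wnc_iff by blast
      show ?thesis
      proof (rule conv[OF A B])
        fix a :: 'a and b :: 'b
        obtain e where e: "e * e = e" and ed: "(\<exists>k. (a + - e) ^ k = 0) \<or> (\<exists>k. (a + e) ^ k = 0)"
          using wa by blast
        from ed show "\<exists>e f. e * e = e \<and> f * f = f \<and>
          (((\<exists>k. (a - e) ^ k = 0) \<and> (\<exists>k. (b - f) ^ k = 0)) \<or>
           ((\<exists>k. (a + e) ^ k = 0) \<and> (\<exists>k. (b + f) ^ k = 0)))"
        proof
          assume ea: "\<exists>k. (a + - e) ^ k = 0"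
          obtain q f where q: "\<exists>k. q ^ k = 0" and f: "f * f = f" and bf: "b = f + q" using nc by blast
          have "b - f = q" using bf by simp
          then show ?thesis using q e f ea by auto
        next
          assume ea: "\<exists>k. (a + e) ^ k = 0"
          obtain q f where q: "\<exists>k. q ^ k = 0" and f: "f * f = f" and bf: "- b = f + q" using nc by blast
          have "b + f = - (- b) + f" by simp
          also have "\<dots> = - (f + q) + f" by (simp only: bf)
          also have "\<dots> = - q" by (simp add: algebra_simps)
          finally have "b + f = - q" .
          then have "\<exists>k. (b + f) ^ k = 0" using q neg_nilp by metis
          then show ?thesis using e f ea by auto
        qed
      qed
    qed
  qed
qed


end
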